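(* Let $a,b,c,d>0$, $\theta>0$ satisfy $-(\theta a+\theta^2 b)<(\theta-1)(\theta+1)^2<\theta c+\theta^2 d$, and consider on $\mathcal{I}=[0,1]^2$ the system $$\dot x=x(1-x)\big[xr(-c+d-a+b)+x(a-b)-r(d+b)+b\big]+\mu(1-2x),\qquad \dot r=r(1-r)\big[\theta x-(1-x)\big].$$ Then for every $\mu\in(0,1]$, all equilibria of the system lying on the boundary $\partial\mathcal{I}$ of the square are unstable. *)

theory Defs
  imports "HOL-Analysis.Analysis"
begin

definition sysF :: "real \<Rightarrow> real \<Rightarrow> real \<Rightarrow> real \<Rightarrow> real \<Rightarrow> real \<Rightarrow> real \<times> real \<Rightarrow> real \<times> real" where
  "sysF a b c d \<theta> \<mu> = (\<lambda>(x, r).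
     (x * (1 - x) * (x * r * (- c + d - a + b) + x * (a - b) - r * (d + b) + b) + \<mu> * (1 - 2 * x),
      r * (1 - r) * (\<theta> * x - (1 - x))))"

definition unit_square :: "(real \<times> real) set" where
  "unit_square = {0..1} \<times> {0..1}"

definition is_fwd_solution :: "('a::real_normed_vector \<Rightarrow> 'a) \<Rightarrow> 'a set \<Rightarrow> (real \<Rightarrow> 'a) \<Rightarrow> bool" where
  "is_fwd_solution F S u \<longleftrightarrow>
     (\<forall>t\<ge>0. u t \<in> S \<and> (u has_vector_derivative F (u t)) (at t within {0..}))"

definition is_equilibrium :: "('a::real_normed_vector \<Rightarrow> 'a) \<Rightarrow> 'a set \<Rightarrow> 'a \<Rightarrow> bool" where
  "is_equilibrium F S p \<longleftrightarrow> p \<in> S \<and> F p = 0"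

definition lyapunov_stable :: "('a::real_normed_vector \<Rightarrow> 'a) \<Rightarrow> 'a set \<Rightarrow> 'a \<Rightarrow> bool" where
  "lyapunov_stable F S p \<longleftrightarrow>
     (\<forall>\<epsilon>>0. \<exists>\<delta>>0. \<forall>u. is_fwd_solution F S u \<and> dist (u 0) p < \<delta> \<longrightarrow>
        (\<forall>t\<ge>0. dist (u t) p < \<epsilon>))"

definition unstable :: "('a::real_normed_vector \<Rightarrow> 'a) \<Rightarrow> 'a set \<Rightarrow> 'a \<Rightarrow> bool" where
  "unstable F S p \<longleftrightarrow> \<not> lyapunov_stable F S p"

end

theory Submission imports Defs begin

lemma integral_deriv0:
  fixes f :: "real \<Rightarrow> 'a::banach"
  assumes "continuous_on UNIV f" "t \<ge> 0"
  shows "((\<lambda>\<tau>. integral {0..\<tau>} f) has_vector_derivative f t) (at t within {0..})"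
proof -
  have "((\<lambda>\<tau>. integral {0..\<tau>} f) has_vector_derivative f t) (at t within {0..t+1})"
    by (rule integral_has_vector_derivative) (use assms in \<open>auto intro: continuous_on_subset\<close>)
  moreover have "at t within {0..t+1} = at t within {0..}"
    by (rule at_within_nhd[of t "{..<t+1}"]) auto
  ultimately show ?thesis by simp
qed

lemma ode_exists:
  fixes G :: "'a::banach \<Rightarrow> 'a"
  assumes lip: "\<And>x y. norm (G x - G y) \<le> L * norm (x - y)" and L: "L \<ge> 0"
      and bnd: "\<And>x. norm (G x) \<le> M"
  shows "\<exists>u. u 0 = q \<and> (\<forall>t\<ge>0. (u has_vector_derivative G (u t)) (at t within {0..}))"
proof -
  define k where "k = 2*L + 1"
  have k: "k > 0" "L \<le> k/2" using L by (auto simp: k_def)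
  have M: "M \<ge> 0" using bnd[of 0] norm_ge_zero[of "G 0"] by linarith
  have "L-lipschitz_on UNIV G" using lip L by (auto simp: lipschitz_on_def dist_norm)
  then have contG: "continuous_on UNIV G" by (rule lipschitz_on_continuous_on)
  define g where "g v y = G (exp (k*y) *\<^sub>R apply_bcontfun v y)" for v :: "real \<Rightarrow>\<^sub>C 'a" and y
  have gcont: "continuous_on UNIV (g v)" for v
    unfolding g_def
    by (rule continuous_on_compose2[OF contG]) (auto intro!: continuous_intros)
  define H where "H v t = exp (-k * max 0 t) *\<^sub>R (q + integral {0..max 0 t} (g v))" for v t
  have intbnd: "norm (integral {0..m} (g v)) \<le> M * m" if "m \<ge> 0" for v m
  proof -
    have "norm (integral {0..m} (g v)) \<le> integral {0..m} (\<lambda>_. M)"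
      by (rule integral_norm_bound_integral)
        (auto intro!: integrable_continuous_real continuous_on_subset[OF gcont] simp: g_def bnd)
    then show ?thesis using that by (simp add: mult.commute)
  qed
  have H_bc: "H v \<in> bcontfun" for v
  proof -
    have c: "continuous_on {0..} (\<lambda>\<tau>. integral {0..\<tau>} (g v))"
      by (rule continuous_on_vector_derivative[OF integral_deriv0[OF gcont]]) auto
    have c2: "continuous_on UNIV (\<lambda>t. integral {0..max 0 t} (g v))"
      proof (rule continuous_on_compose2[OF c])
      show "continuous_on UNIV (\<lambda>t::real. max 0 t)" by (intro continuous_intros)
    qed (use [[show_types, show_sorts]] in auto)
    have "continuous_on UNIV (H v)"
      unfolding H_def
      by (intro continuous_intros c2)
    moreover have "bounded (range (H v))"
    proof -
      have "norm (H v t) \<le> norm q + M / k" for t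
      proof -
        define m where "m = max 0 t"
        have m: "m \<ge> 0" by (simp add: m_def)
        have e: "exp (-k*m) * m \<le> 1/k"
        proof -
          have "k*m < exp (k*m)" using exp_ge_add_one_self[of "k*m"] by linarith
          then have "exp (-k*m) * (k*m) \<le> 1"
            by (simp add: exp_minus field_simps)
          then show ?thesis using k by (simp add: field_simps)
        qed
        have "norm (H v t) = exp (-k*m) * norm (q + integral {0..m} (g v))"
          by (simp add: H_def m_def)
        also have "\<dots> \<le> exp (-k*m) * (norm q + M*m)"
          by (intro mult_left_mono order.trans[OF norm_triangle_ineq] add_left_mono intbnd m) auto
        also have "\<dots> = exp (-k*m) * norm q + M * (exp (-k*m) * m)" by (simp add: algebra_simps)
        also have "\<dots> \<le> norm q + M * (1/k)"
          proof -
          have "exp (-k*m) \<le> 1" using k m by simp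
          then have "exp (-k*m) * norm q \<le> norm q" by (simp add: mult_left_le_one_le)
          then show ?thesis using e M by (intro add_mono mult_left_mono) auto
        qed
        finally show ?thesis by simp
      qed
      then show ?thesis by (auto simp: bounded_iff)
    qed
    ultimately show ?thesis by (simp add: bcontfun_def)
  qed

  define \<Phi> where "\<Phi> v = Bcontfun (H v)" for v
  have \<Phi>app: "apply_bcontfun (\<Phi> v) = H v" for v
    using H_bc by (simp add: \<Phi>_def Bcontfun_inverse)
  have contr: "dist (\<Phi> v) (\<Phi> w) \<le> (1/2) * dist v w" for v w
  proof (rule dist_bound)
    fix t :: real
    define m where "m = max 0 t"
    have m: "m \<ge> 0" by (simp add: m_def)
    define D where "D = dist v w"
    have D: "D \<ge> 0" by (simp add: D_def)
    have gd: "norm (g v y - g w y) \<le> L * D * exp (k*y)" for y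
    proof -
      have "norm (g v y - g w y) \<le> L * norm (exp (k*y) *\<^sub>R apply_bcontfun v y - exp (k*y) *\<^sub>R apply_bcontfun w y)"
        unfolding g_def by (rule lip)
      also have "\<dots> = L * (exp (k*y) * dist (apply_bcontfun v y) (apply_bcontfun w y))"
        by (simp add: dist_norm flip: scaleR_diff_right)
      also have "\<dots> \<le> L * (exp (k*y) * D)"
        unfolding D_def by (intro mult_left_mono dist_bounded L) auto
      finally show ?thesis by (simp add: algebra_simps)
    qed
    have expint: "((\<lambda>y. L * D * exp (k*y)) has_integral (L*D*exp (k*m)/k - L*D/k)) {0..m}"
    proof -
      have "((\<lambda>y. L * D * exp (k*y)) has_integral ((\<lambda>y. L*D*exp (k*y)/k) m - (\<lambda>y. L*D*exp (k*y)/k) 0)) {0..m}"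
        using m k
        by (intro fundamental_theorem_of_calculus)
          (auto intro!: derivative_eq_intros simp: has_real_derivative_iff_has_vector_derivative[symmetric])
      then show ?thesis by simp
    qed
    have intv: "g v integrable_on {0..m}" "g w integrable_on {0..m}"
      by (auto intro!: integrable_continuous_real continuous_on_subset[OF gcont])
    have "dist (\<Phi> v t) (\<Phi> w t) = exp (-k*m) * norm (integral {0..m} (g v) - integral {0..m} (g w))"
      by (simp add: \<Phi>app H_def m_def dist_norm flip: scaleR_diff_right)
    also have "integral {0..m} (g v) - integral {0..m} (g w) = integral {0..m} (\<lambda>y. g v y - g w y)"
      using intv by (simp add: integral_diff)
    also have "norm (integral {0..m} (\<lambda>y. g v y - g w y)) \<le> integral {0..m} (\<lambda>y. L * D * exp (k*y))"
      using intv expint gd by (intro integral_norm_bound_integral) (auto intro: integrable_diff has_integral_integrable)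
    also have "integral {0..m} (\<lambda>y. L * D * exp (k*y)) = L*D*exp (k*m)/k - L*D/k"
      using expint by (rule integral_unique)
    also have "exp (-k*m) * (L*D*exp (k*m)/k - L*D/k) \<le> L * D / k"
    proof -
      have "exp (-k*m) * (L*D*exp (k*m)/k - L*D/k) = L*D/k - exp (-k*m) * (L*D/k)"
        by (simp add: algebra_simps exp_minus field_simps)
      moreover have "exp (-k*m) * (L*D/k) \<ge> 0" using L D k by auto
      ultimately show ?thesis by linarith
    qed
    also have "L * D / k \<le> (1/2) * D"
      using k D L by (simp add: field_simps) (metis mult_right_mono mult.commute)
    finally show "dist (\<Phi> v t) (\<Phi> w t) \<le> (1/2) * dist v w"
      by (simp add: D_def mult_left_mono)
  qed
  obtain v where v: "\<Phi> v = v"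
    using banach_fix_type[of "1/2" \<Phi>] contr by auto
  define u where "u t = exp (k*t) *\<^sub>R apply_bcontfun v t" for t
  have ueq: "u t = q + integral {0..t} (g v)" if "t \<ge> 0" for t
  proof -
    have "apply_bcontfun v t = H v t" using v \<Phi>app by metis
    then show ?thesis using that by (simp add: u_def H_def exp_minus)
  qed
  have gu: "g v y = G (u y)" for y by (simp add: g_def u_def)
  have "(u has_vector_derivative G (u t)) (at t within {0..})" if "t \<ge> 0" for t
  proof -
    have "((\<lambda>t. q + integral {0..t} (g v)) has_vector_derivative g v t) (at t within {0..})"
      using integral_deriv0[OF gcont that] by (auto intro!: derivative_eq_intros)
    then have "(u has_vector_derivative g v t) (at t within {0..})"
      by (rule has_vector_derivative_transform[rotated 2]) (use that ueq in auto)
    then show ?thesis by (simp add: gu)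
  qed
  moreover have "u 0 = q" by (simp add: ueq)
  ultimately show ?thesis by blast
qed

lemma stay_nonneg:
  fixes y y' :: "real \<Rightarrow> real"
  assumes cont: "continuous_on {0..} y"
    and der: "\<And>t. t > 0 \<Longrightarrow> (y has_real_derivative y' t) (at t)"
    and sign: "\<And>t. t > 0 \<Longrightarrow> y t < 0 \<Longrightarrow> y' t \<ge> 0"
    and y0: "y 0 \<ge> 0" and t: "t \<ge> 0"
  shows "y t \<ge> 0"
proof (rule ccontr)
  assume neg: "\<not> y t \<ge> 0"
  with y0 t have t0: "t > 0" by (cases "t = 0") auto
  define S where "S = {0..t} \<inter> y -` {0..}"
  have cS: "closed S" unfolding S_def
    by (rule continuous_closed_preimage) (auto intro: continuous_on_subset[OF cont])
  have S0: "0 \<in> S" using y0 t by (auto simp: S_def)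
  have bS: "bdd_above S" by (auto simp: S_def bdd_above_def)
  define s where "s = Sup S"
  have sS: "s \<in> S" unfolding s_def using closed_contains_Sup[OF _ bS cS] S0 by blast
  have after: "y z < 0" if "s < z" "z \<le> t" for z
  proof (rule ccontr)
    assume "\<not> y z < 0"
    then have "z \<in> S" using that sS by (auto simp: S_def)
    then have "z \<le> s" unfolding s_def using bS by (rule cSup_upper)
    then show False using that by simp
  qed
  have st: "s < t" using sS neg by (auto simp: S_def less_eq_real_def)
  have s0: "s \<ge> 0" using sS by (auto simp: S_def)
  obtain l z where z: "s < z" "z < t" "(y has_real_derivative l) (at z)" "y t - y s = (t - s) * l"
  proof -
    have cs: "continuous_on {s..t} y" using s0 by (intro continuous_on_subset[OF cont]) auto
    have ds: "y differentiable (at x)" if "s < x" "x < t" for x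
      using der[of x] that s0 by (auto simp: real_differentiable_def)
    show ?thesis using MVT[OF st cs ds] that by blast
  qed
  have "l = y' z" using z(3) der[of z] z s0 DERIV_unique by auto
  then have "l \<ge> 0" using sign[of z] after[of z] z s0 by auto
  then have "(t - s) * l \<ge> 0" using st by simp
  then have "y t \<ge> y s" using z by linarith
  then show False using sS neg by (auto simp: S_def)
qed

lemma growth_contra:
  fixes y y' :: "real \<Rightarrow> real"
  assumes cont: "continuous_on {0..} y"
    and der: "\<And>t. t > 0 \<Longrightarrow> (y has_real_derivative y' t) (at t)"
    and grow: "\<And>t. t > 0 \<Longrightarrow> y' t \<ge> c * y t"
    and c: "c > 0" and y0: "y 0 > 0" and le1: "\<And>t. t \<ge> 0 \<Longrightarrow> y t \<le> 1"
  shows False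
proof -
  define z where "z t = y t * exp (- c * t)" for t
  have zmono: "z t \<ge> z 0" if tp: "t > 0" for t
  proof -
    have dz: "(z has_real_derivative (y' x * exp (-c*x) - c * y x * exp (-c*x))) (at x)" if "x > 0" for x
      unfolding z_def using der[OF that]
      by (auto intro!: derivative_eq_intros simp: algebra_simps)
    have cz: "continuous_on {0..t} z" unfolding z_def
      by (intro continuous_intros continuous_on_subset[OF cont]) auto
    obtain l w where w: "0 < w" "w < t" "(z has_real_derivative l) (at w)" "z t - z 0 = (t - 0) * l"
      using MVT[OF tp cz] dz real_differentiable_def by (metis order.strict_trans)
    have "l = y' w * exp (-c*w) - c * y w * exp (-c*w)" using w dz DERIV_unique by blast
    also have "\<dots> = (y' w - c * y w) * exp (-c*w)" by (simp add: algebra_simps)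
    finally have "l \<ge> 0" using grow[of w] w by simp
    then have "(t - 0) * l \<ge> 0" using tp by simp
    then show ?thesis using w by linarith
  qed
  define t where "t = 2 / (c * y 0)"
  have tpos: "t > 0" using c y0 by (simp add: t_def)
  have "y t * exp (- c * t) \<ge> y 0" using zmono[OF tpos] by (simp add: z_def)
  then have "y t \<ge> y 0 * exp (c * t)" by (simp add: exp_minus field_simps)
  moreover have "exp (c * t) > c * t" using exp_ge_add_one_self[of "c*t"] by linarith
  then have "y 0 * exp (c * t) > y 0 * (c * t)" using y0 by simp
  moreover have "y 0 * (c * t) = 2" using c y0 by (simp add: t_def)
  ultimately have "y t > 1" by linarith
  then show False using le1[of t] tpos by linarith
qed

lemma vd_components:
  fixes u :: "real \<Rightarrow> real \<times> real"
  assumes "(u has_vector_derivative D) (at t within {0..})" "t > 0"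
  shows "((\<lambda>t. fst (u t)) has_real_derivative fst D) (at t)"
    and "((\<lambda>t. snd (u t)) has_real_derivative snd D) (at t)"
proof -
  have "at t within {0..} = at t" using assms(2) by (intro at_within_interior) auto
  then have d: "(u has_derivative (\<lambda>h. h *\<^sub>R D)) (at t)" using assms(1) by (simp add: has_vector_derivative_def)
  show "((\<lambda>t. fst (u t)) has_real_derivative fst D) (at t)"
    proof -
    have e: "(\<lambda>x. x * fst D) = (*) (fst D)" by (auto simp: fun_eq_iff)
    show ?thesis using has_derivative_fst[OF d] unfolding has_field_derivative_def by (simp add: e)
  qed
  show "((\<lambda>t. snd (u t)) has_real_derivative snd D) (at t)"
    proof -
    have e: "(\<lambda>x. x * snd D) = (*) (snd D)" by (auto simp: fun_eq_iff)
    show ?thesis using has_derivative_snd[OF d] unfolding has_field_derivative_def by (simp add: e)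
  qed
qed


definition cl :: "real \<Rightarrow> real" where "cl z = min 1 (max 0 z)"

definition LB :: "(real \<times> real \<Rightarrow> real) \<Rightarrow> bool" where
  "LB f \<longleftrightarrow> (\<exists>L. \<forall>p q. \<bar>f p - f q\<bar> \<le> L * norm (p - q)) \<and> (\<exists>B. \<forall>p. \<bar>f p\<bar> \<le> B)"

lemma LB_const: "LB (\<lambda>p. k)"
  unfolding LB_def by (auto intro!: exI[of _ 0] exI[of _ "\<bar>k\<bar>"])

lemma LB_add: "LB f \<Longrightarrow> LB g \<Longrightarrow> LB (\<lambda>p. f p + g p)"
  unfolding LB_def
proof (elim conjE exE, intro conjI)
  fix L1 L2 B1 B2
  assume h: "\<forall>p q. \<bar>f p - f q\<bar> \<le> L1 * norm (p - q)" "\<forall>p q. \<bar>g p - g q\<bar> \<le> L2 * norm (p - q)"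
     "\<forall>p. \<bar>f p\<bar> \<le> B1" "\<forall>p. \<bar>g p\<bar> \<le> B2"
  show "\<exists>L. \<forall>p q. \<bar>f p + g p - (f q + g q)\<bar> \<le> L * norm (p - q)"
  proof (intro exI allI)
    fix p q
    have "\<bar>f p + g p - (f q + g q)\<bar> \<le> \<bar>f p - f q\<bar> + \<bar>g p - g q\<bar>" by linarith
    also have "\<dots> \<le> (L1 + L2) * norm (p - q)" using h(1,2)[rule_format, of p q] by (simp add: distrib_right)
    finally show "\<bar>f p + g p - (f q + g q)\<bar> \<le> (L1 + L2) * norm (p - q)" .
  qed
  show "\<exists>B. \<forall>p. \<bar>f p + g p\<bar> \<le> B"
    proof (intro exI allI)
    fix p show "\<bar>f p + g p\<bar> \<le> B1 + B2" using h(3,4)[rule_format, of p] by linarith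
  qed
qed

lemma LB_neg: "LB f \<Longrightarrow> LB (\<lambda>p. - f p)"
proof -
  assume "LB f"
  then obtain L B where h: "\<forall>p q. \<bar>f p - f q\<bar> \<le> L * norm (p - q)" "\<forall>p. \<bar>f p\<bar> \<le> B"
    unfolding LB_def by blast
  have "\<forall>p q. \<bar>- f p - - f q\<bar> \<le> L * norm (p - q)"
  proof (intro allI)
    fix p q
    have "\<bar>- f p - - f q\<bar> = \<bar>f p - f q\<bar>" by linarith
    then show "\<bar>- f p - - f q\<bar> \<le> L * norm (p - q)" using h(1)[rule_format, of p q] by linarith
  qed
  moreover have "\<forall>p. \<bar>- f p\<bar> \<le> B" using h(2) by simp
  ultimately show ?thesis unfolding LB_def by blast
qed

lemma LB_diff: "LB f \<Longrightarrow> LB g \<Longrightarrow> LB (\<lambda>p. f p - g p)"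
  using LB_add[of f "\<lambda>p. - g p"] LB_neg[of g] by simp

lemma LB_mult: "LB f \<Longrightarrow> LB g \<Longrightarrow> LB (\<lambda>p. f p * g p)"
  unfolding LB_def
proof (elim conjE exE, intro conjI)
  fix L1 L2 B1 B2
  assume h: "\<forall>p q. \<bar>f p - f q\<bar> \<le> L1 * norm (p - q)" "\<forall>p q. \<bar>g p - g q\<bar> \<le> L2 * norm (p - q)"
     "\<forall>p. \<bar>f p\<bar> \<le> B1" "\<forall>p. \<bar>g p\<bar> \<le> B2"
  have B1: "B1 \<ge> 0" using h(3)[rule_format, of undefined] by linarith
  have B2: "B2 \<ge> 0" using h(4)[rule_format, of undefined] by linarith
  show "\<exists>L. \<forall>p q. \<bar>f p * g p - f q * g q\<bar> \<le> L * norm (p - q)"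
  proof (intro exI allI)
    fix p q
    have "f p * g p - f q * g q = f p * (g p - g q) + g q * (f p - f q)" by (simp add: algebra_simps)
    then have "\<bar>f p * g p - f q * g q\<bar> \<le> \<bar>f p\<bar> * \<bar>g p - g q\<bar> + \<bar>g q\<bar> * \<bar>f p - f q\<bar>"
      by (simp add: abs_mult[symmetric] abs_triangle_ineq)
    also have "\<dots> \<le> B1 * (L2 * norm (p - q)) + B2 * (L1 * norm (p - q))"
      using h(1,2)[rule_format, of p q] h(3)[rule_format, of p] h(4)[rule_format, of q] B1 B2
      by (intro add_mono mult_mono) auto
    also have "\<dots> = (B1 * L2 + B2 * L1) * norm (p - q)" by (simp add: algebra_simps)
    finally show "\<bar>f p * g p - f q * g q\<bar> \<le> (B1 * L2 + B2 * L1) * norm (p - q)" .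
  qed
  show "\<exists>B. \<forall>p. \<bar>f p * g p\<bar> \<le> B"
    using h(3,4) B1 B2 by (intro exI[of _ "B1*B2"]) (simp add: abs_mult mult_mono)
qed

lemma cl_lip: "\<bar>cl x - cl y\<bar> \<le> \<bar>x - y\<bar>"
  by (simp add: cl_def min_def max_def)

lemma LB_X: "LB (\<lambda>p. cl (fst p))"
  unfolding LB_def
proof (intro conjI exI allI)
  fix p q :: "real \<times> real"
  have "\<bar>cl (fst p) - cl (fst q)\<bar> \<le> \<bar>fst p - fst q\<bar>" by (rule cl_lip)
  also have "\<dots> = norm (fst (p - q))" by simp
  also have "\<dots> \<le> norm (p - q)" by (metis norm_fst_le prod.collapse)
  finally show "\<bar>cl (fst p) - cl (fst q)\<bar> \<le> 1 * norm (p - q)" by simp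
  show "\<bar>cl (fst p)\<bar> \<le> 1" by (simp add: cl_def)
qed

lemma LB_R: "LB (\<lambda>p. cl (snd p))"
  unfolding LB_def
proof (intro conjI exI allI)
  fix p q :: "real \<times> real"
  have "\<bar>cl (snd p) - cl (snd q)\<bar> \<le> \<bar>snd p - snd q\<bar>" by (rule cl_lip)
  also have "\<dots> = norm (snd (p - q))" by simp
  also have "\<dots> \<le> norm (p - q)" by (metis norm_snd_le prod.collapse)
  finally show "\<bar>cl (snd p) - cl (snd q)\<bar> \<le> 1 * norm (p - q)" by simp
  show "\<bar>cl (snd p)\<bar> \<le> 1" by (simp add: cl_def)
qed

definition Gs where "Gs a b c d \<theta> \<mu> p = sysF a b c d \<theta> \<mu> (cl (fst p), cl (snd p))"

lemma norm_pair_le: "norm (z :: real \<times> real) \<le> \<bar>fst z\<bar> + \<bar>snd z\<bar>"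
  unfolding norm_prod_def by (simp add: sqrt_sum_squares_le_sum_abs)

lemma Gs_lip_bnd: "\<exists>L M. L \<ge> 0 \<and> (\<forall>x y. norm (Gs a b c d \<theta> \<mu> x - Gs a b c d \<theta> \<mu> y) \<le> L * norm (x - y))
   \<and> (\<forall>x. norm (Gs a b c d \<theta> \<mu> x) \<le> M)"
proof -
  have l1: "LB (\<lambda>p. fst (Gs a b c d \<theta> \<mu> p))"
    unfolding Gs_def sysF_def
    by (simp, intro LB_add LB_diff LB_mult LB_const LB_X LB_R)
  have l2: "LB (\<lambda>p. snd (Gs a b c d \<theta> \<mu> p))"
    unfolding Gs_def sysF_def
    by (simp, intro LB_add LB_diff LB_mult LB_const LB_X LB_R)
  obtain L1 B1 L2 B2 where h: "\<forall>p q. \<bar>fst (Gs a b c d \<theta> \<mu> p) - fst (Gs a b c d \<theta> \<mu> q)\<bar> \<le> L1 * norm (p - q)"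
    "\<forall>p q. \<bar>snd (Gs a b c d \<theta> \<mu> p) - snd (Gs a b c d \<theta> \<mu> q)\<bar> \<le> L2 * norm (p - q)"
    "\<forall>p. \<bar>fst (Gs a b c d \<theta> \<mu> p)\<bar> \<le> B1" "\<forall>p. \<bar>snd (Gs a b c d \<theta> \<mu> p)\<bar> \<le> B2"
    using l1 l2 unfolding LB_def by blast
  have "norm (Gs a b c d \<theta> \<mu> x - Gs a b c d \<theta> \<mu> y) \<le> \<bar>L1 + L2\<bar> * norm (x - y)" for x y
  proof -
    have "norm (Gs a b c d \<theta> \<mu> x - Gs a b c d \<theta> \<mu> y) \<le> \<bar>fst (Gs a b c d \<theta> \<mu> x) - fst (Gs a b c d \<theta> \<mu> y)\<bar> + \<bar>snd (Gs a b c d \<theta> \<mu> x) - snd (Gs a b c d \<theta> \<mu> y)\<bar>"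
      using norm_pair_le[of "Gs a b c d \<theta> \<mu> x - Gs a b c d \<theta> \<mu> y"] by simp
    also have "\<dots> \<le> (L1 + L2) * norm (x - y)" using h(1,2)[rule_format, of x y] by (simp add: distrib_right)
    also have "\<dots> \<le> \<bar>L1 + L2\<bar> * norm (x - y)" by (intro mult_right_mono) auto
    finally show ?thesis .
  qed
  moreover have "norm (Gs a b c d \<theta> \<mu> x) \<le> B1 + B2" for x
    using norm_pair_le[of "Gs a b c d \<theta> \<mu> x"] h(3,4)[rule_format, of x] by linarith
  ultimately show ?thesis by (intro exI[of _ "\<bar>L1+L2\<bar>"] exI[of _ "B1+B2"]) auto
qed


lemma cl_id: "0 \<le> z \<Longrightarrow> z \<le> 1 \<Longrightarrow> cl z = z"
  by (simp add: cl_def)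

lemma sol_exists:
  assumes mu: "\<mu> \<ge> 0" and q: "q \<in> unit_square"
  shows "\<exists>u. u 0 = q \<and> is_fwd_solution (sysF a b c d \<theta> \<mu>) unit_square u"
proof -
  let ?G = "Gs a b c d \<theta> \<mu>"
  obtain L M where LM: "L \<ge> 0" "\<And>x y. norm (?G x - ?G y) \<le> L * norm (x - y)" "\<And>x. norm (?G x) \<le> M"
    using Gs_lip_bnd by blast
  obtain u where u0: "u 0 = q" and ud: "\<And>t. t \<ge> 0 \<Longrightarrow> (u has_vector_derivative ?G (u t)) (at t within {0..})"
    using ode_exists[of ?G L M q] LM by blast
  have cu: "continuous_on {0..} u"
    by (rule continuous_on_vector_derivative) (use ud in auto)
  have c1: "continuous_on {0..} (\<lambda>t. fst (u t))" "continuous_on {0..} (\<lambda>t. snd (u t))"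
    using cu by (auto intro: continuous_intros)
  have d1: "((\<lambda>t. fst (u t)) has_real_derivative fst (?G (u t))) (at t)"
     "((\<lambda>t. snd (u t)) has_real_derivative snd (?G (u t))) (at t)" if "t > 0" for t
    using vd_components[OF ud that] that by auto
  have q01: "0 \<le> fst q" "fst q \<le> 1" "0 \<le> snd q" "snd q \<le> 1"
    using q by (auto simp: unit_square_def mem_Times_iff)
  have inS: "u t \<in> unit_square" if t: "t \<ge> 0" for t
  proof -
    have "fst (u t) \<ge> 0"
      by (rule stay_nonneg[OF c1(1) d1(1) _ _ t])
        (use mu q01 u0 in \<open>auto simp: Gs_def sysF_def cl_def split: prod.splits\<close>)
    moreover have "1 - fst (u t) \<ge> 0"
      by (rule stay_nonneg[where y' = "\<lambda>t. - fst (?G (u t))", OF _ _ _ _ t])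
        (use mu q01 u0 c1 d1 in \<open>auto intro!: continuous_intros derivative_eq_intros simp: Gs_def sysF_def cl_def split: prod.splits\<close>)
    moreover have "snd (u t) \<ge> 0"
      by (rule stay_nonneg[OF c1(2) d1(2) _ _ t])
        (use mu q01 u0 in \<open>auto simp: Gs_def sysF_def cl_def split: prod.splits\<close>)
    moreover have "1 - snd (u t) \<ge> 0"
      by (rule stay_nonneg[where y' = "\<lambda>t. - snd (?G (u t))", OF _ _ _ _ t])
        (use mu q01 u0 c1 d1 in \<open>auto intro!: continuous_intros derivative_eq_intros simp: Gs_def sysF_def cl_def split: prod.splits\<close>)
    ultimately show ?thesis by (auto simp: unit_square_def mem_Times_iff)
  qed
  have "?G (u t) = sysF a b c d \<theta> \<mu> (u t)" if "t \<ge> 0" for t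
    using inS[OF that] by (cases "u t") (auto simp: Gs_def unit_square_def cl_id)
  then have "is_fwd_solution (sysF a b c d \<theta> \<mu>) unit_square u"
    using inS ud by (auto simp: is_fwd_solution_def)
  then show ?thesis using u0 by blast
qed


lemma eq0_pos:
  fixes a b \<theta> \<mu> x :: real
  assumes a: "a > 0" and b: "b > 0" and th: "\<theta> > 0" and H: "- (\<theta> * a + \<theta>^2 * b) < (\<theta> - 1) * (\<theta> + 1)^2"
    and mu: "0 < \<mu>" "\<mu> \<le> 1" and x: "0 < x" "x < 1" and hx: "\<theta> * x \<le> 1 - x"
  shows "x * (1 - x) * (x * (a - b) + b) + \<mu> * (1 - 2 * x) > 0"
proof (cases "1 - 2*x \<ge> 0")
  case True
  have "x * (a - b) + b = x * a + (1 - x) * b" by (simp add: algebra_simps)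
  also have "\<dots> > 0" using a b x by (intro add_pos_nonneg) auto
  finally have "x * (1 - x) * (x * (a - b) + b) > 0" using x by simp
  moreover have "\<mu> * (1 - 2 * x) \<ge> 0" using mu True by simp
  ultimately show ?thesis by linarith
next
  case False
  define t where "t = (1 - x) / x"
  have tx: "1 - x = t * x" using x by (simp add: t_def)
  have t: "t \<ge> \<theta>" using hx x by (simp add: t_def field_simps)
  have t1: "t < 1" using False x by (simp add: t_def field_simps)
  have tp: "t > 0" using t th by simp
  define Q where "Q = t * (a + t * b) - (1 - t) * (1 + t)^2"
  have xt: "x * (1 + t) = 1" using tx by (simp add: algebra_simps)
  have P: "x * (1 - x) * (x * (a - b) + b) - (2 * x - 1) = x^3 * Q"
  proof -
    have "x * (1 - x) * (x * (a - b) + b) = x * (1 - x) * (x * a + (1 - x) * b)"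
      by (simp add: algebra_simps)
    also have "\<dots> = x^3 * (t * (a + t*b))"
      by (simp add: tx power3_eq_cube algebra_simps)
    finally have "x * (1 - x) * (x * (a - b) + b) = x^3 * (t * (a + t*b))" .
    moreover have "2 * x - 1 = x^3 * ((1 - t) * (1 + t)^2)"
    proof -
      have "x^3 * ((1 - t) * (1 + t)^2) = x * (1 - t) * (x * (1 + t))^2"
        by (simp add: power2_eq_square power3_eq_cube algebra_simps)
      also have "\<dots> = x * (1 - t)" by (simp add: xt)
      also have "\<dots> = 2 * x - 1" using tx by (simp add: algebra_simps)
      finally show ?thesis by simp
    qed
    ultimately show ?thesis by (simp add: Q_def algebra_simps)
  qed
  have k1: "\<theta> * t * (a + t * b) \<ge> t * (\<theta> * a + \<theta>^2 * b)"
  proof -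
    have "\<theta> * t * t * b \<ge> \<theta> * t * \<theta> * b" using t th tp b by (intro mult_right_mono mult_left_mono) auto
    then show ?thesis by (simp add: power2_eq_square algebra_simps)
  qed
  have k2: "t * (\<theta> * a + \<theta>^2 * b) > t * ((1 - \<theta>) * (1 + \<theta>)^2)"
    using H tp by (intro mult_strict_left_mono) (auto simp: algebra_simps)
  have k3: "t * ((1 - \<theta>) * (1 + \<theta>)^2) - \<theta> * ((1 - t) * (1 + t)^2) = (t - \<theta>) * (1 + \<theta>*t + \<theta>*t*(t+\<theta>))"
    by (simp add: power2_eq_square algebra_simps)
  have k4: "(t - \<theta>) * (1 + \<theta>*t + \<theta>*t*(t+\<theta>)) \<ge> 0" using t th tp by (intro mult_nonneg_nonneg) auto
  have "\<theta> * Q > 0" using k1 k2 k3 k4 by (simp add: Q_def algebra_simps)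
  then have "Q > 0" using th by (simp add: zero_less_mult_iff)
  then have "x^3 * Q > 0" using x by simp
  moreover have "\<mu> * (1 - 2 * x) \<ge> 1 - 2 * x"
  proof -
    have "(1 - \<mu>) * (2 * x - 1) \<ge> 0" using False mu by (intro mult_nonneg_nonneg) auto
    then show ?thesis by (simp add: algebra_simps)
  qed
  ultimately show ?thesis using P by linarith
qed

lemma eq1_neg:
  fixes a b c d \<theta> \<mu> x :: real
  assumes c: "c > 0" and d: "d > 0" and th: "\<theta> > 0" and H: "(\<theta> - 1) * (\<theta> + 1)^2 < \<theta> * c + \<theta>^2 * d"
    and mu: "0 < \<mu>" "\<mu> \<le> 1" and x: "0 < x" "x < 1" and hx: "\<theta> * x \<ge> 1 - x"
  shows "x * (1 - x) * (x * (- c + d - a + b) + x * (a - b) - (d + b) + b) + \<mu> * (1 - 2 * x) < 0"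
proof -
  have e: "x * (- c + d - a + b) + x * (a - b) - (d + b) + b = - (x * c + (1 - x) * d)"
    by (simp add: algebra_simps)
  show ?thesis
  proof (cases "1 - 2*x \<le> 0")
    case True
    have "x * c + (1 - x) * d > 0" using c d x by (intro add_pos_nonneg) auto
    then have "x * (1 - x) * (x * c + (1 - x) * d) > 0" using x by simp
    moreover have "\<mu> * (1 - 2 * x) \<le> 0" using mu True by (simp add: mult_nonneg_nonpos)
    ultimately show ?thesis unfolding e by linarith
  next
    case False
    define t where "t = (1 - x) / x"
    have tx: "1 - x = t * x" using x by (simp add: t_def)
    have t: "t \<le> \<theta>" using hx x by (simp add: t_def field_simps)
    have t1: "t > 1" using False x by (simp add: t_def field_simps)
    have tp: "t > 0" using t1 by simp
    define Q where "Q = t * (c + t * d) - (t - 1) * (1 + t)^2"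
    have xt: "x * (1 + t) = 1" using tx by (simp add: algebra_simps)
    have P: "x * (1 - x) * (x * c + (1 - x) * d) - (1 - 2 * x) = x^3 * Q"
    proof -
      have "x * (1 - x) * (x * c + (1 - x) * d) = x^3 * (t * (c + t*d))"
        by (simp add: tx power3_eq_cube algebra_simps)
      moreover have "1 - 2 * x = x^3 * ((t - 1) * (1 + t)^2)"
      proof -
        have "x^3 * ((t - 1) * (1 + t)^2) = x * (t - 1) * (x * (1 + t))^2"
          by (simp add: power2_eq_square power3_eq_cube algebra_simps)
        also have "\<dots> = x * (t - 1)" by (simp add: xt)
        also have "\<dots> = 1 - 2 * x" using tx by (simp add: algebra_simps)
        finally show ?thesis by simp
      qed
      ultimately show ?thesis by (simp add: Q_def algebra_simps)
    qed
    have k1: "\<theta> * (c + t * d) \<ge> t * (c + \<theta> * d)"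
    proof -
      have "\<theta> * c \<ge> t * c" using t c by (intro mult_right_mono) auto
      then show ?thesis by (simp add: algebra_simps)
    qed
    have k1': "\<theta>^2 * (t * (c + t * d)) \<ge> t * t * (\<theta> * c + \<theta>^2 * d)"
    proof -
      have "\<theta>^2 * (t * (c + t * d)) = t * \<theta> * (\<theta> * (c + t * d))" by (simp add: power2_eq_square algebra_simps)
      also have "\<dots> \<ge> t * \<theta> * (t * (c + \<theta> * d))" using k1 tp th by (intro mult_left_mono) auto
      finally show ?thesis by (simp add: power2_eq_square algebra_simps)
    qed
    have k2: "t * t * (\<theta> * c + \<theta>^2 * d) > t * t * ((\<theta> - 1) * (\<theta> + 1)^2)"
      using H tp by (intro mult_strict_left_mono) auto
    have k3: "t * t * ((\<theta> - 1) * (\<theta> + 1)^2) - \<theta>^2 * ((t - 1) * (1 + t)^2) = (\<theta> - t) * (t*t*\<theta>*\<theta> + t*\<theta> + \<theta> + t)"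
      by (simp add: power2_eq_square algebra_simps)
    have k4: "(\<theta> - t) * (t*t*\<theta>*\<theta> + t*\<theta> + \<theta> + t) \<ge> 0" using t th tp by (intro mult_nonneg_nonneg) auto
    have "\<theta>^2 * Q > 0" using k1' k2 k3 k4 by (simp add: Q_def algebra_simps)
    then have "Q > 0" using th by (simp add: zero_less_mult_iff)
    then have "x^3 * Q > 0" using x by simp
    moreover have "\<mu> * (1 - 2 * x) \<le> 1 - 2 * x"
    proof -
      have "(1 - \<mu>) * (1 - 2 * x) \<ge> 0" using False mu by (intro mult_nonneg_nonneg) auto
      then show ?thesis by (simp add: algebra_simps)
    qed
    ultimately show ?thesis unfolding e using P by linarith
  qed
qed


lemma dist_comp_le:
  fixes z p :: "real \<times> real"
  shows "\<bar>fst z - fst p\<bar> \<le> dist z p" "\<bar>snd z - snd p\<bar> \<le> dist z p"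
proof -
  have "\<bar>fst z - fst p\<bar> = norm (fst (z - p))" by simp
  also have "\<dots> \<le> norm (z - p)" by (metis norm_fst_le prod.collapse)
  finally show "\<bar>fst z - fst p\<bar> \<le> dist z p" by (simp add: dist_norm)
  have "\<bar>snd z - snd p\<bar> = norm (snd (z - p))" by simp
  also have "\<dots> \<le> norm (z - p)" by (metis norm_snd_le prod.collapse)
  finally show "\<bar>snd z - snd p\<bar> \<le> dist z p" by (simp add: dist_norm)
qed

lemma fwd_facts:
  assumes "is_fwd_solution (F :: real \<times> real \<Rightarrow> real \<times> real) S u"
  shows "continuous_on {0..} (\<lambda>t. snd (u t))"
    and "\<And>t. t > 0 \<Longrightarrow> ((\<lambda>t. snd (u t)) has_real_derivative snd (F (u t))) (at t)"
    and "\<And>t. t \<ge> 0 \<Longrightarrow> u t \<in> S"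
proof -
  have ud: "\<And>t. t \<ge> 0 \<Longrightarrow> (u has_vector_derivative F (u t)) (at t within {0..})"
    using assms by (auto simp: is_fwd_solution_def)
  have "continuous_on {0..} u"
    by (rule continuous_on_vector_derivative) (use ud in auto)
  then show "continuous_on {0..} (\<lambda>t. snd (u t))" by (auto intro: continuous_intros)
  show "((\<lambda>t. snd (u t)) has_real_derivative snd (F (u t))) (at t)" if "t > 0" for t
    using vd_components(2)[OF ud that] that by auto
  show "u t \<in> S" if "t \<ge> 0" for t using assms that by (auto simp: is_fwd_solution_def)
qed

theorem lemma12:
  fixes a b c d \<theta> \<mu> :: real
  assumes "a > 0" "b > 0" "c > 0" "d > 0" "\<theta> > 0"
    and "- (\<theta> * a + \<theta>^2 * b) < (\<theta> - 1) * (\<theta> + 1)^2"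
    and "(\<theta> - 1) * (\<theta> + 1)^2 < \<theta> * c + \<theta>^2 * d"
    and "0 < \<mu>" "\<mu> \<le> 1"
  shows "\<forall>p. p \<in> frontier unit_square \<and> is_equilibrium (sysF a b c d \<theta> \<mu>) unit_square p
           \<longrightarrow> unstable (sysF a b c d \<theta> \<mu>) unit_square p"
proof (intro allI impI, elim conjE)
  fix p assume pf: "p \<in> frontier unit_square" and peq: "is_equilibrium (sysF a b c d \<theta> \<mu>) unit_square p"
  let ?F = "sysF a b c d \<theta> \<mu>"
  obtain x0 r0 where p: "p = (x0, r0)" by (cases p)
  have sq: "0 \<le> x0" "x0 \<le> 1" "0 \<le> r0" "r0 \<le> 1"
    using peq p by (auto simp: is_equilibrium_def unit_square_def)
  have F0: "?F (x0, r0) = 0" using peq p by (simp add: is_equilibrium_def)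
  then have F1: "x0 * (1 - x0) * (x0 * r0 * (- c + d - a + b) + x0 * (a - b) - r0 * (d + b) + b) + \<mu> * (1 - 2 * x0) = 0"
    and F2: "r0 * (1 - r0) * (\<theta> * x0 - (1 - x0)) = 0"
    by (simp_all add: sysF_def zero_prod_def)
  have int: "{0<..<1} \<times> {0<..<1} \<subseteq> interior unit_square"
    by (rule interior_maximal) (auto simp: unit_square_def open_Times)
  have notint: "p \<notin> interior unit_square" using pf by (simp add: frontier_def)
  have "x0 \<noteq> 0" using F1 assms by auto
  moreover have "x0 \<noteq> 1" using F1 assms by auto
  ultimately have x0: "0 < x0" "x0 < 1" using sq by auto
  have r01: "r0 = 0 \<or> r0 = 1"
  proof (rule ccontr)
    assume "\<not> (r0 = 0 \<or> r0 = 1)"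
    then have "p \<in> {0<..<1} \<times> {0<..<1}" using sq x0 p by auto
    then show False using int notint by auto
  qed
  show "unstable ?F unit_square p"
    unfolding unstable_def lyapunov_stable_def
  proof
    assume stab: "\<forall>\<epsilon>>0. \<exists>\<delta>>0. \<forall>u. is_fwd_solution ?F unit_square u \<and> dist (u 0) p < \<delta> \<longrightarrow>
        (\<forall>t\<ge>0. dist (u t) p < \<epsilon>)"
    define h0 where "h0 = \<theta> * x0 - (1 - x0)"
    show False
    proof (cases "r0 = 0")
      case True
      have "h0 > 0"
      proof (rule ccontr)
        assume "\<not> h0 > 0"
        then have "\<theta> * x0 \<le> 1 - x0" by (simp add: h0_def)
        from eq0_pos[OF assms(1,2,5,6,8,9) x0 this] show False using F1 True by simp
      qed
      define \<epsilon> where "\<epsilon> = min (1/2) (h0 / (2 * (\<theta> + 1)))"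
      have ep: "\<epsilon> > 0" using \<open>h0 > 0\<close> assms by (simp add: \<epsilon>_def)
      obtain \<delta> where dp: "\<delta> > 0" and dd: "\<And>u. is_fwd_solution ?F unit_square u \<Longrightarrow> dist (u 0) p < \<delta> \<Longrightarrow>
          (\<forall>t\<ge>0. dist (u t) p < \<epsilon>)"
        using stab ep by blast
      define r1 where "r1 = min (\<delta>/2) (1/2)"
      have r1: "0 < r1" "r1 < \<delta>" "r1 \<le> 1/2" using dp by (auto simp: r1_def)
      have qS: "(x0, r1) \<in> unit_square" using x0 r1 by (auto simp: unit_square_def)
      obtain u where u0: "u 0 = (x0, r1)" and us: "is_fwd_solution ?F unit_square u"
        using sol_exists[OF _ qS] assms by (metis less_imp_le)
      have "dist (u 0) p = r1" using u0 p True r1 by (simp add: dist_Pair_Pair)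
      then have close: "\<And>t. t \<ge> 0 \<Longrightarrow> dist (u t) p < \<epsilon>" using dd[OF us] r1 by auto
      note ff = fwd_facts[OF us]
      show False
      proof (rule growth_contra[OF ff(1) ff(2)])
        show "h0 / 4 > 0" using \<open>h0 > 0\<close> by simp
        show "snd (u 0) > 0" using u0 r1 by simp
        show "snd (u t) \<le> 1" if "t \<ge> 0" for t using ff(3)[OF that] by (auto simp: unit_square_def mem_Times_iff)
        show "snd (?F (u t)) \<ge> h0 / 4 * snd (u t)" if "t > 0" for t
        proof -
          obtain x y where uxy: "u t = (x, y)" by (cases "u t")
          have ins: "0 \<le> y" "y \<le> 1" using ff(3)[of t] that uxy by (auto simp: unit_square_def)
          have cl: "dist (u t) p < \<epsilon>" using close that by simp
          have dx: "\<bar>x - x0\<bar> < \<epsilon>" using dist_comp_le(1)[of "u t" p] cl uxy p by simp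
          have dy: "\<bar>y - 0\<bar> < \<epsilon>" using dist_comp_le(2)[of "u t" p] cl uxy p True by simp
          have "\<epsilon> \<le> 1/2" unfolding \<epsilon>_def by (rule min.cobounded1)
          then have y2: "1 - y \<ge> 1/2" using dy by linarith
          have "\<theta> * x - (1 - x) = h0 + (\<theta> + 1) * (x - x0)" by (simp add: h0_def algebra_simps)
          moreover have "(\<theta> + 1) * \<bar>x - x0\<bar> \<le> h0 / 2"
          proof -
            have "(\<theta> + 1) * \<bar>x - x0\<bar> \<le> (\<theta> + 1) * (h0 / (2 * (\<theta> + 1)))"
              using dx assms by (intro mult_left_mono) (auto simp: \<epsilon>_def)
            moreover have "(\<theta> + 1) * (h0 / (2 * (\<theta> + 1))) = h0 / 2" using assms by (simp add: field_simps)
            ultimately show ?thesis by linarith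
          qed
          moreover have "(\<theta> + 1) * (x - x0) \<ge> - ((\<theta> + 1) * \<bar>x - x0\<bar>)"
          proof -
            have "(\<theta> + 1) * (x0 - x) \<le> (\<theta> + 1) * \<bar>x - x0\<bar>" using assms by (intro mult_left_mono) auto
            then show ?thesis by (simp add: algebra_simps)
          qed
          ultimately have hx: "\<theta> * x - (1 - x) \<ge> h0 / 2" by linarith
          have "(1 - y) * (\<theta> * x - (1 - x)) \<ge> (1/2) * (h0 / 2)"
            using hx y2 \<open>h0 > 0\<close> by (intro mult_mono) auto
          then have "y * ((1 - y) * (\<theta> * x - (1 - x))) \<ge> y * (h0 / 4)"
            using ins by (intro mult_left_mono) auto
          then show ?thesis using uxy by (simp add: sysF_def algebra_simps)
        qed
      qed
    next
      case False
      then have r0: "r0 = 1" using r01 by simp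
      have "h0 < 0"
      proof (rule ccontr)
        assume "\<not> h0 < 0"
        then have "\<theta> * x0 \<ge> 1 - x0" by (simp add: h0_def)
        from eq1_neg[OF assms(3,4,5,7,8,9) x0 this, of a b] show False using F1 r0 by simp
      qed
      define \<kappa> where "\<kappa> = - h0"
      have kp: "\<kappa> > 0" using \<open>h0 < 0\<close> by (simp add: \<kappa>_def)
      define \<epsilon> where "\<epsilon> = min (1/2) (\<kappa> / (2 * (\<theta> + 1)))"
      have ep: "\<epsilon> > 0" using kp assms by (simp add: \<epsilon>_def)
      obtain \<delta> where dp: "\<delta> > 0" and dd: "\<And>u. is_fwd_solution ?F unit_square u \<Longrightarrow> dist (u 0) p < \<delta> \<Longrightarrow>
          (\<forall>t\<ge>0. dist (u t) p < \<epsilon>)"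
        using stab ep by blast
      define r1 where "r1 = min (\<delta>/2) (1/2)"
      have r1: "0 < r1" "r1 < \<delta>" "r1 \<le> 1/2" using dp by (auto simp: r1_def)
      have qS: "(x0, 1 - r1) \<in> unit_square" using x0 r1 by (auto simp: unit_square_def)
      obtain u where u0: "u 0 = (x0, 1 - r1)" and us: "is_fwd_solution ?F unit_square u"
        using sol_exists[OF _ qS] assms by (metis less_imp_le)
      have "dist (u 0) p = r1" using u0 p r0 r1 by (simp add: dist_Pair_Pair)
      then have close: "\<And>t. t \<ge> 0 \<Longrightarrow> dist (u t) p < \<epsilon>" using dd[OF us] r1 by auto
      note ff = fwd_facts[OF us]
      have cy: "continuous_on {0..} (\<lambda>t. 1 - snd (u t))" by (rule continuous_on_diff[OF continuous_on_const ff(1)])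
      have dy: "((\<lambda>t. 1 - snd (u t)) has_real_derivative - snd (?F (u t))) (at t)" if "t > 0" for t
        using ff(2)[OF that] by (auto intro!: derivative_eq_intros)
      show False
      proof (rule growth_contra[OF cy dy])
        show "\<kappa> / 4 > 0" using kp by simp
        show "1 - snd (u 0) > 0" using u0 r1 by simp
        show "1 - snd (u t) \<le> 1" if "t \<ge> 0" for t using ff(3)[OF that] by (auto simp: unit_square_def mem_Times_iff)
        show "- snd (?F (u t)) \<ge> \<kappa> / 4 * (1 - snd (u t))" if "t > 0" for t
        proof -
          obtain x y where uxy: "u t = (x, y)" by (cases "u t")
          have ins: "0 \<le> y" "y \<le> 1" using ff(3)[of t] that uxy by (auto simp: unit_square_def)
          have cl: "dist (u t) p < \<epsilon>" using close that by simp
          have dx: "\<bar>x - x0\<bar> < \<epsilon>" using dist_comp_le(1)[of "u t" p] cl uxy p by simp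
          have dy: "\<bar>y - 1\<bar> < \<epsilon>" using dist_comp_le(2)[of "u t" p] cl uxy p r0 by simp
          have "\<epsilon> \<le> 1/2" unfolding \<epsilon>_def by (rule min.cobounded1)
          then have y2: "y \<ge> 1/2" using dy by linarith
          have "(1 - x) - \<theta> * x = \<kappa> - (\<theta> + 1) * (x - x0)" by (simp add: \<kappa>_def h0_def algebra_simps)
          moreover have "(\<theta> + 1) * \<bar>x - x0\<bar> \<le> \<kappa> / 2"
          proof -
            have "(\<theta> + 1) * \<bar>x - x0\<bar> \<le> (\<theta> + 1) * (\<kappa> / (2 * (\<theta> + 1)))"
              using dx assms by (intro mult_left_mono) (auto simp: \<epsilon>_def)
            moreover have "(\<theta> + 1) * (\<kappa> / (2 * (\<theta> + 1))) = \<kappa> / 2" using assms by (simp add: field_simps)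
            ultimately show ?thesis by linarith
          qed
          moreover have "(\<theta> + 1) * (x - x0) \<le> (\<theta> + 1) * \<bar>x - x0\<bar>" using assms
            by (intro mult_left_mono) auto
          ultimately have hx: "(1 - x) - \<theta> * x \<ge> \<kappa> / 2" by linarith
          have "y * ((1 - x) - \<theta> * x) \<ge> (1/2) * (\<kappa> / 2)"
            using hx y2 kp by (intro mult_mono) auto
          then have "(1 - y) * (y * ((1 - x) - \<theta> * x)) \<ge> (1 - y) * (\<kappa> / 4)"
            using ins by (intro mult_left_mono) auto
          then show ?thesis using uxy by (simp add: sysF_def algebra_simps)
        qed
      qed
    qed
  qed
qed

end
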